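(* Let $C = a_1, \dots, a_h, a_1$ and $D = b_1,\dots,b_g,b_1$ be two distinct cycles of an optimal (minimum-weight) cycle cover of the distance graph $G_S$, and let $e=\langle a_1,\dots,a_h\rangle$ and $f=\langle b_1,\dots,b_g\rangle$. Then $e$ and $f$ are inequivalent. Moreover, each of the pairs $(e,\bar f^R)$, $(\bar e^R, f)$ and $(\bar e^R,\bar f^R)$ is inequivalent.
   Context: Alphabet $\Sigma=\{\texttt a,\texttt t,\texttt g,\texttt c\}$ with complement $\bar{\texttt a}=\texttt t$, $\bar{\texttt t}=\texttt a$, $\bar{\texttt g}=\texttt c$, $\bar{\texttt c}=\texttt g$; the reverse complement of $s=b_1\cdots b_n$ is $\bar{s}^R=\bar{b_n}\cdots\bar{b_1}$. $S=\{s_1,\dots,s_m\}$ is a finite set of strings over $\Sigma$ such that no string of $S\cup\bar S^R$ is a substring of another, where $\bar S^R=\{\bar s^R: s\in S\}$. For strings $x,y$, $\mathrm{ov}(x,y)$ is the length of the longest $v$ with $x=uv$, $y=vw$ for nonempty $u,w$; $\mathrm{pref}(x,y)=u$; $\mathrm{dist}(x,y)=|x|-\mathrm{ov}(x,y)$; $\langle x_1,\dots,x_r\rangle=\mathrm{pref}(x_1,x_2)\cdots\mathrm{pref}(x_{r-1},x_r)\,x_r$. The distance graph $G_S$ is the complete directed graph (with loops) on vertex set $S\cup\bar S^R$ with edge weights $w(x,y)=\mathrm{dist}(x,y)$. A cycle $x_1,\dots,x_r,x_1$ (distinct vertices, $r\ge1$) has weight $\sum_{i=1}^r\mathrm{dist}(x_i,x_{i+1})$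 with $x_{r+1}=x_1$. A cycle cover of $G_S$ is a set of vertex-disjoint cycles such that for each $i$ exactly one of $s_i,\bar{s_i}^R$ lies on the cycles; it is optimal if it has minimum total weight. For a finite string $s$, $\mathrm{factor}(s)$ is the shortest string $x$ with $s=x^iy$ for some integer $i\ge1$ and some (possibly empty) prefix $y$ of $x$, and $\mathrm{period}(s)=|\mathrm{factor}(s)|$. Two strings $x,y$ are equivalent if $\mathrm{factor}(y)$ is a cyclic shift of $\mathrm{factor}(x)$ (i.e. $\mathrm{factor}(x)=pq$, $\mathrm{factor}(y)=qp$ for some strings $p,q$), and inequivalent otherwise. *)

theory Defs
  imports Main "HOL-Library.Sublist"
begin

datatype nuc = Na | Nt | Ng | Nc

fun comp :: "nuc \<Rightarrow> nuc" where
  "comp Na = Nt" | "comp Nt = Na" | "comp Ng = Nc" | "comp Nc = Ng"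

definition rc :: "nuc list \<Rightarrow> nuc list" where
  "rc s = rev (map comp s)"

text \<open>Length of the longest v with x = u v, y = v w, u and w nonempty.\<close>
definition ov :: "'a list \<Rightarrow> 'a list \<Rightarrow> nat" where
  "ov x y = Max {k. k < length x \<and> k < length y \<and> drop (length x - k) x = take k y}"

definition pref :: "'a list \<Rightarrow> 'a list \<Rightarrow> 'a list" where
  "pref x y = take (length x - ov x y) x"

definition dist :: "'a list \<Rightarrow> 'a list \<Rightarrow> nat" where
  "dist x y = length x - ov x y"

fun merge :: "'a list list \<Rightarrow> 'a list" where
  "merge [] = []"
| "merge [x] = x"
| "merge (x # y # zs) = pref x y @ merge (y # zs)"

definition vertices :: "nuc list set \<Rightarrow> nuc list set" where
  "vertices S = S \<union> rc ` S"

definition substring_free :: "nuc list set \<Rightarrow> bool" where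
  "substring_free S \<longleftrightarrow>
     (\<forall>x\<in>vertices S. \<forall>y\<in>vertices S. x \<noteq> y \<longrightarrow> \<not> sublist x y)"

text \<open>A cycle x_1,...,x_r,x_1 is represented by the list [x_1,...,x_r].\<close>
definition cycle_weight :: "nuc list list \<Rightarrow> nat" where
  "cycle_weight c = (\<Sum>i<length c. dist (c ! i) (c ! ((i + 1) mod length c)))"

definition is_cycle :: "nuc list set \<Rightarrow> nuc list list \<Rightarrow> bool" where
  "is_cycle S c \<longleftrightarrow> c \<noteq> [] \<and> distinct c \<and> set c \<subseteq> vertices S"

definition cycle_cover :: "nuc list set \<Rightarrow> nuc list list set \<Rightarrow> bool" where
  "cycle_cover S CC \<longleftrightarrow>
     finite CC \<and> (\<forall>c\<in>CC. is_cycle S c)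
     \<and> (\<forall>c\<in>CC. \<forall>d\<in>CC. c \<noteq> d \<longrightarrow> set c \<inter> set d = {})
     \<and> (\<forall>s\<in>S. let U = (\<Union>c\<in>CC. set c) in
           (s \<in> U \<or> rc s \<in> U) \<and> (s \<noteq> rc s \<longrightarrow> \<not> (s \<in> U \<and> rc s \<in> U)))"

definition cover_weight :: "nuc list list set \<Rightarrow> nat" where
  "cover_weight CC = (\<Sum>c\<in>CC. cycle_weight c)"

definition optimal_cycle_cover :: "nuc list set \<Rightarrow> nuc list list set \<Rightarrow> bool" where
  "optimal_cycle_cover S CC \<longleftrightarrow> cycle_cover S CC \<and>
     (\<forall>CC'. cycle_cover S CC' \<longrightarrow> cover_weight CC \<le> cover_weight CC')"

definition factor_decomp :: "'a list \<Rightarrow> 'a list \<Rightarrow> bool" where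
  "factor_decomp x s \<longleftrightarrow> (\<exists>i y. i \<ge> 1 \<and> prefix y x \<and> s = concat (replicate i x) @ y)"

definition factor :: "'a list \<Rightarrow> 'a list" where
  "factor s = (ARG_MIN length x. factor_decomp x s)"

definition period :: "'a list \<Rightarrow> nat" where
  "period s = length (factor s)"

definition equivalent :: "'a list \<Rightarrow> 'a list \<Rightarrow> bool" where
  "equivalent x y \<longleftrightarrow> (\<exists>p q. factor x = p @ q \<and> factor y = q @ p)"

end

theory Submission
  imports Defs
begin

lemma ov_set_finite: "finite {k. k < length x \<and> k < length y \<and> drop (length x - k) x = take k y}"
  by (rule finite_subset[of _ "{..<length x}"]) auto

lemma ov_props:
  assumes "x \<noteq> []" "y \<noteq> []"
  shows "ov x y < length x" "ov x y < length y"
    "drop (length x - ov x y) x = take (ov x y) y"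
proof -
  let ?K = "{k. k < length x \<and> k < length y \<and> drop (length x - k) x = take k y}"
  have "0 \<in> ?K" using assms by auto
  hence "ov x y \<in> ?K" unfolding ov_def using ov_set_finite Max_in by blast
  thus "ov x y < length x" "ov x y < length y"
    "drop (length x - ov x y) x = take (ov x y) y" by auto
qed

lemma ov_ge:
  assumes "k < length x" "k < length y" "drop (length x - k) x = take k y"
  shows "k \<le> ov x y"
  unfolding ov_def using assms ov_set_finite by (intro Max_ge) auto

lemma pref_ov: assumes "x \<noteq> []" "y \<noteq> []"
  shows "x = pref x y @ take (ov x y) y"
proof -
  have "x = take (length x - ov x y) x @ drop (length x - ov x y) x" by simp
  thus ?thesis using ov_props[OF assms] unfolding pref_def by simp
qed

lemma prefix_pref: assumes "x \<noteq> []" "y \<noteq> []"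
  shows "prefix x (pref x y @ y)"
proof -
  have "prefix (pref x y @ take (ov x y) y) (pref x y @ y)"
    by (simp add: take_is_prefix)
  thus ?thesis using pref_ov[OF assms] by simp
qed

lemma dist_pos: assumes "x \<noteq> []" "y \<noteq> []" shows "dist x y > 0"
  using ov_props[OF assms] unfolding dist_def by simp

lemma length_pref: "length (pref x y) = dist x y"
  unfolding pref_def dist_def by simp

fun mpre :: "'a list list \<Rightarrow> 'a list" where
  "mpre (x # y # zs) = pref x y @ mpre (y # zs)"
| "mpre _ = []"

lemma merge_mpre: "xs \<noteq> [] \<Longrightarrow> merge xs = mpre xs @ last xs"
  by (induction xs rule: mpre.induct) auto

lemma mpre_snoc: "xs \<noteq> [] \<Longrightarrow> mpre (xs @ [y]) = mpre xs @ pref (last xs) y"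
  by (induction xs rule: mpre.induct) auto

lemma length_mpre: "length (mpre xs) = (\<Sum>k<length xs - 1. dist (xs!k) (xs!(k+1)))"
proof (induction xs rule: mpre.induct)
  case (1 x y zs)
  have "length (mpre (x # y # zs)) = dist x y + length (mpre (y#zs))"
    by (simp add: length_pref)
  also have "\<dots> = dist x y + (\<Sum>k<length zs. dist ((y#zs)!k) ((y#zs)!(k+1)))"
    using 1 by simp
  also have "\<dots> = (\<Sum>k<Suc (length zs). dist ((x#y#zs)!k) ((x#y#zs)!(k+1)))"
    by (subst sum.lessThan_Suc_shift) simp
  finally show ?case by simp
qed auto

lemma prefix_merge: "\<forall>z\<in>set (x#xs). z \<noteq> [] \<Longrightarrow> prefix x (merge (x # xs))"
proof (induction xs arbitrary: x)
  case Nil then show ?case by simp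
next
  case (Cons y zs)
  have "prefix y (merge (y # zs))" using Cons by simp
  hence "prefix (pref x y @ y) (pref x y @ merge (y # zs))" by simp
  moreover have "prefix x (pref x y @ y)" using Cons.prems by (intro prefix_pref) auto
  ultimately show ?case by (auto intro: prefix_order.trans)
qed

lemma sublist_merge: "\<forall>z\<in>set xs. z \<noteq> [] \<Longrightarrow> x \<in> set xs \<Longrightarrow> sublist x (merge xs)"
proof (induction xs rule: mpre.induct)
  case (1 a b zs)
  show ?case
  proof (cases "x = a")
    case True
    then show ?thesis using prefix_merge[of a "b#zs"] 1(2) by (auto intro: prefix_imp_sublist)
  next
    case False
    then have "sublist x (merge (b # zs))" using 1 by auto
    then show ?thesis by (simp add: sublist_append)
  qed
qed auto


definition hasper :: "'a list \<Rightarrow> nat \<Rightarrow> bool" where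
  "hasper s w \<longleftrightarrow> (\<forall>k. k + w < length s \<longrightarrow> s!k = s!(k+w))"

lemma hasper_prefix: assumes "prefix s t" "hasper t w" shows "hasper s w"
  unfolding hasper_def
proof (intro allI impI)
  fix k assume k: "k + w < length s"
  obtain r where t: "t = s @ r" using assms(1) prefix_def by blast
  have "t!k = t!(k+w)" using assms(2) k t unfolding hasper_def by simp
  thus "s!k = s!(k+w)" using k t by (simp add: nth_append)
qed

lemma cw_snoc:
  assumes "cs \<noteq> []"
  shows "cycle_weight cs = length (mpre (cs @ [hd cs]))"
proof -
  let ?n = "length cs"
  have "length (mpre (cs @ [hd cs])) = (\<Sum>k<?n. dist ((cs @ [hd cs])!k) ((cs @ [hd cs])!(k+1)))"
    by (simp add: length_mpre)
  also have "\<dots> = (\<Sum>k<?n. dist (cs!k) (cs!((k+1) mod ?n)))"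
  proof (rule sum.cong)
    fix k assume "k \<in> {..<?n}"
    then have k: "k < ?n" by simp
    show "dist ((cs @ [hd cs])!k) ((cs @ [hd cs])!(k+1)) = dist (cs!k) (cs!((k+1) mod ?n))"
    proof (cases "k + 1 < ?n")
      case True then show ?thesis using k by (simp add: nth_append)
    next
      case False then have "k + 1 = ?n" using k by simp
      then show ?thesis using k assms by (simp add: nth_append hd_conv_nth)
    qed
  qed simp
  finally show ?thesis unfolding cycle_weight_def by simp
qed

lemma merge_period:
  assumes "cs \<noteq> []" "\<forall>z\<in>set cs. z \<noteq> []"
  shows "hasper (merge cs) (cycle_weight cs)"
proof -
  let ?a = "hd cs"
  let ?T = "merge (cs @ [?a])"
  let ?w = "cycle_weight cs"
  have a: "?a \<in> set cs" "?a \<noteq> []" using assms by auto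
  have T: "?T = mpre (cs @ [?a]) @ ?a" using merge_mpre[of "cs @ [?a]"] by simp
  have w: "?w = length (mpre (cs @ [?a]))" using cw_snoc[OF assms(1)] .
  have eq: "cs @ [?a] = ?a # (tl cs @ [?a])" using assms(1) by simp
  have "set (?a # (tl cs @ [?a])) = set cs" using assms(1) by (cases cs) auto
  hence "prefix ?a (merge (?a # (tl cs @ [?a])))" using assms(2) a by (intro prefix_merge) simp
  hence pa: "prefix ?a ?T" by (simp only: eq)
  have hT: "hasper ?T ?w"
    unfolding hasper_def
  proof (intro allI impI)
    fix k assume k: "k + ?w < length ?T"
    hence kl: "k < length ?a" using T w by simp
    have "?T ! (k + ?w) = ?a ! k" using T w by (simp add: nth_append)
    moreover have "?T ! k = ?a ! k" using pa kl unfolding prefix_def by (auto simp: nth_append)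
    ultimately show "?T ! k = ?T ! (k + ?w)" by simp
  qed
  have "merge cs = mpre cs @ last cs" using merge_mpre assms(1) by blast
  moreover have "?T = mpre cs @ pref (last cs) ?a @ ?a"
    using T mpre_snoc[OF assms(1)] by simp
  moreover have "prefix (last cs) (pref (last cs) ?a @ ?a)"
    using assms(2) a(2) last_in_set[OF assms(1)] by (intro prefix_pref) auto
  ultimately have "prefix (merge cs) ?T" by simp
  thus ?thesis using hasper_prefix hT by blast
qed

lemma cw_rotate1: "cycle_weight (rotate1 c) = cycle_weight c"
proof (cases c)
  case Nil then show ?thesis by simp
next
  case (Cons x xs)
  let ?n = "length c"
  define g where "g k = dist (c!k) (c!((k+1) mod ?n))" for k
  have n: "?n = Suc (length xs)" using Cons by simp
  have "cycle_weight (rotate1 c) = (\<Sum>k<?n. g (Suc k mod ?n))"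
    unfolding cycle_weight_def g_def
  proof (intro sum.cong)
    fix k assume "k \<in> {..<?n}"
    hence "Suc k mod ?n < ?n" using n by simp
    hence "rotate1 c ! (Suc k mod ?n) = c ! (Suc (Suc k mod ?n) mod ?n)" by (simp add: nth_rotate1)
    also have "\<dots> = c ! (Suc (Suc k) mod ?n)" by (simp add: mod_Suc_eq)
    finally show "dist (rotate1 c ! k) (rotate1 c ! ((k + 1) mod length (rotate1 c))) = dist (c ! (Suc k mod ?n)) (c ! ((Suc k mod ?n + 1) mod ?n))"
      using \<open>k \<in> {..<?n}\<close> by (simp add: nth_rotate1 mod_Suc_eq)
  qed simp
  also have "\<dots> = (\<Sum>k<length xs. g (Suc k)) + g 0"
    unfolding n by (simp add: sum.lessThan_Suc)
  also have "\<dots> = (\<Sum>k<?n. g k)"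
    unfolding n by (simp only: sum.lessThan_Suc_shift add.commute)
  finally show ?thesis unfolding cycle_weight_def g_def by simp
qed

lemma cw_rotate: "cycle_weight (rotate i c) = cycle_weight c"
  by (induction i) (auto simp: cw_rotate1)

lemma concat_rep_nth: "k < i * length x \<Longrightarrow> concat (replicate i x) ! k = x ! (k mod length x)"
proof (induction i arbitrary: k)
  case 0 then show ?case by simp
next
  case (Suc i)
  show ?case
  proof (cases "k < length x")
    case True then show ?thesis by (simp add: nth_append)
  next
    case False
    then have "concat (replicate (Suc i) x) ! k = concat (replicate i x) ! (k - length x)"
      by (simp add: nth_append)
    also have "\<dots> = x ! ((k - length x) mod length x)" using Suc False by simp
    also have "(k - length x) mod length x = k mod length x" using False
      by (simp add: le_mod_geq)
    finally show ?thesis .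
  qed
qed

lemma fd1:
  assumes "factor_decomp x s" "s \<noteq> []"
  shows "x \<noteq> [] \<and> (\<forall>k<length s. s!k = x!(k mod length x))"
proof -
  obtain i y where iy: "i \<ge> 1" "prefix y x" "s = concat (replicate i x) @ y"
    using assms(1) unfolding factor_decomp_def by blast
  have xne: "x \<noteq> []" using iy assms(2) by auto
  have ly: "length y \<le> length x" using iy(2) prefix_length_le by blast
  have lc: "length (concat (replicate i x)) = i * length x" by (simp add: length_concat sum_list_replicate)
  have "\<forall>k<length s. s!k = x!(k mod length x)"
  proof (intro allI impI)
    fix k assume k: "k < length s"
    show "s!k = x!(k mod length x)"
    proof (cases "k < i * length x")
      case True then show ?thesis using iy(3) lc concat_rep_nth by (simp add: nth_append)
    next
      case False
      define j where "j = k - i * length x"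
      have j: "j < length y" using k False iy(3) lc j_def by simp
      have "s!k = y!j" using False iy(3) lc j_def by (simp add: nth_append)
      also have "\<dots> = x!j" using iy(2) j unfolding prefix_def by (auto simp: nth_append)
      also have "j = k mod length x"
      proof -
        have "k = j + i * length x" using False j_def by simp
        moreover have "j < length x" using j ly by simp
        ultimately show ?thesis by simp
      qed
      finally show ?thesis .
    qed
  qed
  thus ?thesis using xne by simp
qed

lemma fd2:
  "0 < length x \<Longrightarrow> length x \<le> length s \<Longrightarrow> (\<forall>k<length s. s!k = x!(k mod length x))
   \<Longrightarrow> factor_decomp x s"
proof (induction "length s" arbitrary: s rule: less_induct)
  case less
  let ?n = "length x"
  have tk: "take ?n s = x"
    using less.prems by (intro nth_equalityI) auto
  show ?case
  proof (cases "length s < 2 * ?n")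
    case True
    let ?y = "drop ?n s"
    have "prefix ?y x" unfolding prefix_def
    proof
      show "x = ?y @ drop (length ?y) x"
      proof (intro nth_equalityI)
        show "length x = length (?y @ drop (length ?y) x)" using less.prems True by (simp only: length_append length_drop)
        fix k assume "k < length x"
        show "x ! k = (?y @ drop (length ?y) x) ! k"
        proof (cases "k < length ?y")
          case True
          have "?y ! k = s ! (?n + k)" using less.prems by simp
          also have "\<dots> = x ! ((?n + k) mod ?n)" using less.prems True by simp
          also have "\<dots> = x ! k" using \<open>k < length x\<close> by simp
          finally show ?thesis using True by (simp add: nth_append)
        next
          case False
          then show ?thesis using \<open>k < length x\<close> by (simp add: nth_append)
        qed
      qed
    qed
    moreover have "s = x @ ?y" using tk by (metis append_take_drop_id)
    moreover have "concat (replicate 1 x) = x" by simp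
    ultimately have "1 \<ge> (1::nat) \<and> prefix ?y x \<and> s = concat (replicate 1 x) @ ?y" by simp
    thus ?thesis unfolding factor_decomp_def by blast
  next
    case False
    let ?s = "drop ?n s"
    have lt: "length ?s < length s" using less.prems by (simp, intro diff_less) auto
    have "\<forall>k<length ?s. ?s!k = x!(k mod ?n)"
    proof (intro allI impI)
      fix k assume "k < length ?s"
      hence "?s!k = s!(?n + k)" "?n + k < length s" using less.prems by auto
      thus "?s!k = x!(k mod ?n)" using less.prems by simp
    qed
    moreover have "0 < length x" "length x \<le> length ?s" using less.prems False by auto
    ultimately have "factor_decomp x ?s" using less.hyps[OF lt] by blast
    then obtain i y where iy: "i \<ge> 1" "prefix y x" "?s = concat (replicate i x) @ y"
      unfolding factor_decomp_def by blast
    have "s = x @ ?s" using tk by (metis append_take_drop_id)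
    also have "\<dots> = concat (replicate (Suc i) x) @ y" using iy(3) by simp
    finally have "Suc i \<ge> 1 \<and> prefix y x \<and> s = concat (replicate (Suc i) x) @ y" using iy(2) by simp
    thus ?thesis unfolding factor_decomp_def by blast
  qed
qed

lemma factor_props:
  assumes "s \<noteq> []"
  shows "factor s \<noteq> []" "\<forall>k<length s. s!k = factor s ! (k mod length (factor s))"
    "\<And>x. factor_decomp x s \<Longrightarrow> length (factor s) \<le> length x"
proof -
  have "factor_decomp s s" unfolding factor_decomp_def
    by (rule exI[of _ 1], rule exI[of _ "[]"]) simp
  from arg_min_nat_lemma[of "\<lambda>x. factor_decomp x s", OF this]
  have h: "factor_decomp (factor s) s" "\<And>x. factor_decomp x s \<Longrightarrow> length (factor s) \<le> length x"
    unfolding factor_def by auto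
  from fd1[OF h(1) assms] show "factor s \<noteq> []" "\<forall>k<length s. s!k = factor s ! (k mod length (factor s))"
    by auto
  show "\<And>x. factor_decomp x s \<Longrightarrow> length (factor s) \<le> length x" using h(2) .
qed

lemma hasper_mod: assumes "hasper s w" "w > 0" shows "\<forall>k<length s. s!k = s!(k mod w)"
proof (intro allI impI)
  fix k assume "k < length s"
  thus "s!k = s!(k mod w)"
  proof (induction k rule: less_induct)
    case (less k)
    show ?case
    proof (cases "k < w")
      case True then show ?thesis by simp
    next
      case False
      have "s!(k - w) = s!(k - w + w)" using assms(1) less.prems False unfolding hasper_def by simp
      also have "\<dots> = s!k" using False by simp
      finally have "s!k = s!(k-w)" by simp
      also have "\<dots> = s!((k-w) mod w)" using less.IH[of "k-w"] less.prems assms(2) False by simp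
      also have "(k-w) mod w = k mod w" using False by (simp add: le_mod_geq)
      finally show ?thesis .
    qed
  qed
qed

lemma period_le:
  assumes "s \<noteq> []" "hasper s w" "w > 0"
  shows "length (factor s) \<le> w"
proof (cases "w < length s")
  case True
  have "factor_decomp (take w s) s"
    using True assms hasper_mod[OF assms(2,3)] by (intro fd2) auto
  thus ?thesis using factor_props(3)[OF assms(1)] True by fastforce
next
  case False
  have "factor_decomp s s" unfolding factor_decomp_def
    by (rule exI[of _ 1], rule exI[of _ "[]"]) simp
  thus ?thesis using factor_props(3)[OF assms(1)] False by fastforce
qed

definition occ :: "(nat \<Rightarrow> 'a) \<Rightarrow> 'a list \<Rightarrow> nat \<Rightarrow> bool" where
  "occ W x r \<longleftrightarrow> (\<forall>k<length x. x!k = W (r + k))"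

lemma wrap:
  assumes "equivalent a b" "a \<noteq> []" "b \<noteq> []" "hasper a w" "w > 0"
  shows "\<exists>W p. 0 < p \<and> p \<le> w \<and> (\<forall>n. W (n + p) = W n)
    \<and> (\<forall>x. sublist x a \<longrightarrow> (\<exists>r. occ W x r)) \<and> (\<forall>x. sublist x b \<longrightarrow> (\<exists>r. occ W x r))"
proof -
  define u where "u = factor a"
  define p where "p = length u"
  obtain P Q where PQ: "u = P @ Q" "factor b = Q @ P" using assms(1) unfolding equivalent_def u_def by blast
  define W where "W n = u ! (n mod p)" for n
  have p0: "p > 0" using factor_props(1)[OF assms(2)] unfolding p_def u_def by simp
  have pw: "p \<le> w" using period_le[OF assms(2,4,5)] unfolding p_def u_def .
  have per: "\<forall>n. W (n + p) = W n" unfolding W_def by simp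
  have ha: "\<forall>k<length a. a!k = W k" using factor_props(2)[OF assms(2)] unfolding W_def p_def u_def .
  have lfb: "length (factor b) = p" using PQ p_def by simp
  have QP: "\<And>r. r < p \<Longrightarrow> (Q @ P) ! r = u ! ((r + length P) mod p)"
  proof -
    fix r assume r: "r < p"
    show "(Q @ P) ! r = u ! ((r + length P) mod p)"
    proof (cases "r < length Q")
      case True
      then have "(r + length P) mod p = r + length P" using PQ p_def by simp
      then show ?thesis using True PQ by (simp add: nth_append)
    next
      case False
      have "(r + length P) mod p = r - length Q" using False r PQ p_def
        by (simp add: le_mod_geq)
      moreover have "r - length Q < length P" using False r PQ p_def by simp
      ultimately show ?thesis using False PQ by (simp add: nth_append)
    qed
  qed
  have hb: "\<forall>k<length b. b!k = W (k + length P)"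
  proof (intro allI impI)
    fix k assume k: "k < length b"
    have "b!k = (Q @ P) ! (k mod p)" using factor_props(2)[OF assms(3)] k PQ lfb by simp
    also have "\<dots> = u ! ((k mod p + length P) mod p)" using QP p0 by simp
    also have "(k mod p + length P) mod p = (k + length P) mod p" by (simp add: mod_add_left_eq)
    finally show "b!k = W (k + length P)" unfolding W_def .
  qed
  have sa: "\<forall>x. sublist x a \<longrightarrow> (\<exists>r. occ W x r)"
  proof (intro allI impI)
    fix x assume "sublist x a"
    then obtain pre suf where a: "a = pre @ x @ suf" unfolding sublist_def by blast
    have "occ W x (length pre)" unfolding occ_def
    proof (intro allI impI)
      fix k assume "k < length x"
      then have "x!k = a!(length pre + k)" "length pre + k < length a" using a by (auto simp: nth_append)
      thus "x!k = W (length pre + k)" using ha by simp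
    qed
    thus "\<exists>r. occ W x r" by blast
  qed
  have sb: "\<forall>x. sublist x b \<longrightarrow> (\<exists>r. occ W x r)"
  proof (intro allI impI)
    fix x assume "sublist x b"
    then obtain pre suf where b: "b = pre @ x @ suf" unfolding sublist_def by blast
    have "occ W x (length pre + length P)" unfolding occ_def
    proof (intro allI impI)
      fix k assume "k < length x"
      then have "x!k = b!(length pre + k)" "length pre + k < length b" using b by (auto simp: nth_append)
      thus "x!k = W (length pre + length P + k)" using hb by (simp add: ac_simps)
    qed
    thus "\<exists>r. occ W x r" by blast
  qed
  show ?thesis using p0 pw per sa sb by blast
qed

lemma comp_comp[simp]: "comp (comp n) = n" by (cases n) auto

lemma rc_rc[simp]: "rc (rc x) = x" unfolding rc_def by (simp add: rev_map comp_def)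

lemma length_rc[simp]: "length (rc x) = length x" unfolding rc_def by simp

lemma rc_nil_iff[simp]: "rc x = [] \<longleftrightarrow> x = []" unfolding rc_def by simp

lemma sublist_rc: "sublist x y \<Longrightarrow> sublist (rc x) (rc y)"
  unfolding rc_def by (simp add: map_mono_sublist)

lemma hasper_rc: assumes "hasper s w" shows "hasper (rc s) w"
  unfolding hasper_def
proof (intro allI impI)
  fix k assume k: "k + w < length (rc s)"
  have "s ! (length s - Suc (k + w)) = s ! (length s - Suc (k + w) + w)"
    using assms k unfolding hasper_def by simp
  moreover have "length s - Suc (k + w) + w = length s - Suc k" using k by simp
  ultimately show "rc s ! k = rc s ! (k + w)" using k unfolding rc_def by (simp add: rev_nth)
qed

lemma rc_vertices: "x \<in> vertices S \<Longrightarrow> rc x \<in> vertices S"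
  unfolding vertices_def by auto

lemma equivalent_sym: "equivalent x y \<Longrightarrow> equivalent y x"
  unfolding equivalent_def by blast

lemma no_both:
  assumes "cycle_cover S CC" "x \<in> (\<Union>c\<in>CC. set c)" "rc x \<in> (\<Union>c\<in>CC. set c)"
  shows "rc x = x"
proof -
  let ?U = "\<Union>c\<in>CC. set c"
  have "x \<in> vertices S" using assms unfolding cycle_cover_def is_cycle_def by blast
  then consider "x \<in> S" | s where "s \<in> S" "x = rc s" unfolding vertices_def by blast
  then show ?thesis
  proof cases
    case 1
    then have "x \<noteq> rc x \<longrightarrow> \<not> (x \<in> ?U \<and> rc x \<in> ?U)" using assms(1) unfolding cycle_cover_def Let_def by blast
    then show ?thesis using assms by auto
  next
    case 2
    then have "s \<noteq> rc s \<longrightarrow> \<not> (s \<in> ?U \<and> rc s \<in> ?U)" using assms(1) unfolding cycle_cover_def Let_def by blast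
    then show ?thesis using assms 2 by auto
  qed
qed

lemma sf_D: "substring_free S \<Longrightarrow> x \<in> vertices S \<Longrightarrow> y \<in> vertices S \<Longrightarrow> x \<noteq> y \<Longrightarrow> \<not> sublist x y"
  unfolding substring_free_def by blast

lemma all_nonempty:
  assumes sf: "substring_free S" and cc: "cycle_cover S CC"
    and "c0 \<in> CC" "d0 \<in> CC" "c0 \<noteq> d0"
  shows "\<forall>z \<in> set c0 \<union> set d0. z \<noteq> []"
proof -
  have c: "is_cycle S c0" "is_cycle S d0" using cc assms unfolding cycle_cover_def by auto
  have dj: "set c0 \<inter> set d0 = {}" using cc assms unfolding cycle_cover_def by auto
  obtain x y where xy: "x \<in> set c0" "y \<in> set d0" using c unfolding is_cycle_def
    by (metis list.set_intros(1) neq_Nil_conv)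
  have xyne: "x \<noteq> y" using xy dj by auto
  have V: "set c0 \<union> set d0 \<subseteq> vertices S" using c unfolding is_cycle_def by auto
  show ?thesis
  proof
    fix z assume z: "z \<in> set c0 \<union> set d0"
    show "z \<noteq> []"
    proof
      assume zn: "z = []"
      have "\<exists>w. w \<in> set c0 \<union> set d0 \<and> w \<noteq> z"
      proof (cases "x = z")
        case True then show ?thesis using xy xyne by auto
      next
        case False then show ?thesis using xy by auto
      qed
      then obtain w where w: "w \<in> set c0 \<union> set d0" "w \<noteq> z" by blast
      have "z \<in> vertices S" "w \<in> vertices S" using V z w by auto
      hence "\<not> sublist z w" using sf_D[OF sf] w by blast
      thus False using zn by simp
    qed
  qed
qed

lemma cw_pos:
  assumes "c \<noteq> []" "\<forall>z\<in>set c. z \<noteq> []"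
  shows "cycle_weight c > 0"
proof -
  have "0 < length c" using assms by simp
  have "(0+1) mod length c < length c" using \<open>0 < length c\<close> by (rule mod_less_divisor)
  hence "c!((0+1) mod length c) \<in> set c" by (rule nth_mem)
  moreover have "c!0 \<in> set c" using \<open>0 < length c\<close> by (rule nth_mem)
  ultimately have "dist (c!0) (c!((0+1) mod length c)) > 0"
    using assms by (intro dist_pos) auto
  moreover have "dist (c!0) (c!((0+1) mod length c)) \<le> cycle_weight c"
    unfolding cycle_weight_def using \<open>0 < length c\<close>
    by (intro member_le_sum) auto
  ultimately show ?thesis by simp
qed

lemma W_mult:
  fixes W :: "nat \<Rightarrow> 'a" and p m n :: nat
  assumes "\<forall>n. W (n + p) = W n" shows "W (n + m * p) = W n"
proof (induction m)
  case 0 then show ?case by simp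
next
  case (Suc m)
  have "W (n + Suc m * p) = W ((n + m * p) + p)" by (simp add: algebra_simps)
  also have "\<dots> = W (n + m * p)" using assms by blast
  finally show ?case using Suc by simp
qed

lemma occ_mod:
  assumes "\<forall>n. W (n + p) = W n" "occ W x r"
  shows "occ W x (r mod p)" "occ W x (r mod p + p)"
proof -
  have r: "r = r mod p + (r div p) * p" by simp
  show "occ W x (r mod p)" unfolding occ_def
  proof (intro allI impI)
    fix k assume "k < length x"
    then have "x!k = W (r + k)" using assms(2) unfolding occ_def by simp
    also have "r + k = (r mod p + k) + (r div p) * p" by (subst r) simp
    also have "W ((r mod p + k) + (r div p) * p) = W (r mod p + k)" using W_mult[OF assms(1)] by blast
    finally show "x!k = W (r mod p + k)" .
  qed
  then show "occ W x (r mod p + p)" unfolding occ_def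
  proof (intro allI impI)
    fix k assume "\<forall>k<length x. x ! k = W (r mod p + k)" "k < length x"
    hence "x ! k = W (r mod p + k)" by simp
    also have "W (r mod p + k) = W (r mod p + k + p)" using assms(1) by simp
    finally show "x ! k = W (r mod p + p + k)" by (simp add: ac_simps)
  qed
qed

lemma occ_same:
  assumes "occ W x r" "occ W y r" "length x \<le> length y"
  shows "sublist x y"
proof -
  have "take (length x) y = x" using assms unfolding occ_def
    by (intro nth_equalityI) auto
  thus ?thesis by (metis prefix_imp_sublist take_is_prefix)
qed

lemma dist_le_occ:
  assumes "occ W x o1" "occ W y o2" "o1 < o2" "\<not> sublist y x" "x \<noteq> []" "y \<noteq> []"
  shows "dist x y \<le> o2 - o1"
proof (cases "o2 - o1 \<ge> length x")
  case True then show ?thesis unfolding dist_def by simp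
next
  case False
  define d where "d = o2 - o1"
  define k where "k = length x - d"
  have d0: "d > 0" using assms(3) d_def by simp
  have kx: "k < length x" using d0 False k_def d_def by simp
  have ky: "k < length y"
  proof (rule ccontr)
    assume "\<not> k < length y"
    hence "take (length y) (drop d x) = y"
      using assms(1,2,3) False unfolding occ_def d_def k_def
      by (intro nth_equalityI) (auto simp: add.assoc)
    hence "x = take d x @ y @ drop (length y) (drop d x)"
      by (metis append_take_drop_id)
    hence "sublist y x" by (metis sublist_appendI)
    thus False using assms(4) by simp
  qed
  have "drop (length x - k) x = take k y"
  proof (intro nth_equalityI)
    show "length (drop (length x - k) x) = length (take k y)" using kx ky by simp
    fix j assume "j < length (drop (length x - k) x)"
    hence j: "j < k" using kx by simp
    have "length x - k = d" using False k_def d_def by simp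
    hence "drop (length x - k) x ! j = x ! (d + j)" using j kx by simp
    also have "\<dots> = W (o1 + (d + j))" using assms(1) j k_def unfolding occ_def by simp
    also have "o1 + (d + j) = o2 + j" using assms(3) d_def by simp
    also have "W (o2 + j) = y ! j" using assms(2) j ky unfolding occ_def by simp
    also have "y ! j = take k y ! j" using j by simp
    finally show "drop (length x - k) x ! j = take k y ! j" .
  qed
  hence "k \<le> ov x y" using ov_ge kx ky by blast
  thus ?thesis unfolding dist_def d_def k_def using False by simp
qed

lemma telescope:
  fixes R :: "nat list"
  assumes "\<And>k. Suc k < length R \<Longrightarrow> R!k \<le> R!(Suc k)"
  shows "n < length R \<Longrightarrow> (\<Sum>k<n. R!(Suc k) - R!k) + R!0 = R!n"
proof (induction n)
  case 0 then show ?case by simp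
next
  case (Suc n)
  have "(\<Sum>k<Suc n. R!(Suc k) - R!k) + R!0 = (\<Sum>k<n. R!(Suc k) - R!k) + R!0 + (R!(Suc n) - R!n)"
    by simp
  also have "\<dots> = R!n + (R!(Suc n) - R!n)" using Suc by simp
  also have "\<dots> = R!(Suc n)" using assms[of n] Suc.prems by simp
  finally show ?case .
qed

lemma sorted_cycle_bound:
  fixes V :: "nuc list set" and W :: "nat \<Rightarrow> nuc" and g :: "nuc list \<Rightarrow> nat"
  assumes fin: "finite V" and inj: "inj_on g V" and gp: "\<And>x. x \<in> V \<Longrightarrow> g x < p"
    and occ: "\<And>x. x \<in> V \<Longrightarrow> occ W x (g x)" and per: "\<forall>n. W (n + p) = W n"
    and nsub: "\<And>x y. x \<in> V \<Longrightarrow> y \<in> V \<Longrightarrow> x \<noteq> y \<Longrightarrow> \<not> sublist x y"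
    and ne: "\<And>x. x \<in> V \<Longrightarrow> x \<noteq> []"
    and two: "card V \<ge> 2"
  shows "\<exists>L. distinct L \<and> set L = V \<and> cycle_weight L \<le> p"
proof -
  define R where "R = sorted_list_of_set (g ` V)"
  define h where "h = the_inv_into V g"
  define L where "L = map h R"
  define m where "m = length R"
  have finR: "finite (g ` V)" using fin by simp
  have setR: "set R = g ` V" unfolding R_def using finR by simp
  have distR: "distinct R" unfolding R_def by simp
  have sR: "sorted_wrt (<) R" unfolding R_def by simp
  have m: "m = card V" unfolding m_def using distR setR card_image[OF inj]
    by (metis distinct_card)
  have mlt: "\<And>k l. k < l \<Longrightarrow> l < m \<Longrightarrow> R!k < R!l"
    using sR unfolding m_def by (simp add: sorted_wrt_iff_nth_less)
  have Rin: "\<And>k. k < m \<Longrightarrow> R!k \<in> g ` V" using setR unfolding m_def by (metis nth_mem)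
  have Lk: "\<And>k. k < m \<Longrightarrow> L!k \<in> V \<and> g (L!k) = R!k"
  proof -
    fix k assume k: "k < m"
    have "L!k = h (R!k)" unfolding L_def using k m_def by simp
    thus "L!k \<in> V \<and> g (L!k) = R!k" using Rin[OF k] inj unfolding h_def
      by (simp add: the_inv_into_into f_the_inv_into_f)
  qed
  have lenL: "length L = m" unfolding L_def m_def by simp
  have distL: "distinct L" unfolding L_def using distR setR inj unfolding h_def
    by (simp add: distinct_map inj_on_the_inv_into)
  have hg: "\<forall>x\<in>V. h (g x) = x" using the_inv_into_f_f[OF inj] unfolding h_def by blast
  have setL: "set L = V"
  proof (rule set_eqI)
    fix x
    show "x \<in> set L \<longleftrightarrow> x \<in> V"
    proof
      assume "x \<in> set L"
      then obtain y where "y \<in> set R" "x = h y" unfolding L_def by auto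
      then show "x \<in> V" using setR hg by auto
    next
      assume x: "x \<in> V"
      hence "g x \<in> set R" using setR by simp
      hence "h (g x) \<in> set L" unfolding L_def by simp
      thus "x \<in> set L" using hg x by simp
    qed
  qed
  have Rp: "R!k < p" if k: "k < m" for k
  proof -
    obtain x where "x \<in> V" "R!k = g x" using Rin[OF k] by blast
    thus ?thesis using gp by simp
  qed
  have m2: "m \<ge> 2" using two m by simp
  obtain m' where m': "m = Suc m'" using m2 by (cases m) auto
  have m'0: "m' \<ge> 1" using m2 m' by simp
  define bnd where "bnd k = (if Suc k < m then R!(Suc k) - R!k else R!0 + p - R!k)" for k
  have occL: "occ W (L!k) (R!k)" if "k < m" for k
    using occ[of "L!k"] Lk[OF that] by simp
  have inV: "L!k \<in> V" if "k < m" for k using Lk[OF that] by simp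
  have dle: "\<And>k. k < m \<Longrightarrow> dist (L!k) (L!((k+1) mod m)) \<le> bnd k"
  proof -
    fix k assume k: "k < m"
    show "dist (L!k) (L!((k+1) mod m)) \<le> bnd k"
    proof (cases "Suc k < m")
      case True
      have "L!(Suc k) \<noteq> L!k" using distL lenL True k by (simp add: nth_eq_iff_index_eq)
      moreover have "dist (L!k) (L!(Suc k)) \<le> R!(Suc k) - R!k"
      proof (rule dist_le_occ[where W=W])
        show "occ W (L ! k) (R ! k)" using occL k .
        show "occ W (L ! Suc k) (R ! Suc k)" using occL True .
        show "R ! k < R ! Suc k" using mlt[OF _ True, of k] by simp
        show "\<not> sublist (L ! Suc k) (L ! k)" using nsub inV k True calculation by blast
        show "L ! k \<noteq> []" "L ! Suc k \<noteq> []" using ne inV k True by blast+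
      qed
      ultimately show ?thesis using True unfolding bnd_def by simp
    next
      case False
      hence km: "k = m'" using k m' by simp
      have "L!0 \<noteq> L!k" using distL lenL k km m'0 by (simp add: nth_eq_iff_index_eq)
      moreover have o0: "occ W (L!0) (R!0 + p)"
      proof -
        have "occ W (L!0) (R!0)" using occL m' by simp
        hence "occ W (L!0) ((R!0) mod p + p)" using occ_mod(2)[OF per] by blast
        moreover have "R!0 mod p = R!0" using Rp[of 0] m' by simp
        ultimately show ?thesis by simp
      qed
      moreover have "R!k < R!0 + p" using Rp[OF k] by simp
      moreover have "(k+1) mod m = 0" using km m' by simp
      ultimately have "dist (L!k) (L!0) \<le> R!0 + p - R!k"
      proof (intro dist_le_occ[where W=W])
        show "occ W (L ! k) (R ! k)" using occL k .
        have "0 < m" using m' by simp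
        thus "\<not> sublist (L ! 0) (L ! k)" "L ! k \<noteq> []" "L ! 0 \<noteq> []"
          using nsub inV k \<open>L!0 \<noteq> L!k\<close> ne by blast+
      qed (use o0 \<open>R!k < R!0 + p\<close> in auto)
      thus ?thesis using False \<open>(k+1) mod m = 0\<close> unfolding bnd_def by simp
    qed
  qed
  have "cycle_weight L \<le> (\<Sum>k<m. bnd k)"
    unfolding cycle_weight_def lenL using dle by (intro sum_mono) auto
  also have "(\<Sum>k<m. bnd k) = (\<Sum>k<m'. R!(Suc k) - R!k) + (R!0 + p - R!m')"
  proof -
    have "(\<Sum>k<m. bnd k) = (\<Sum>k<m'. bnd k) + bnd m'" unfolding m' by (rule sum.lessThan_Suc)
    moreover have "(\<Sum>k<m'. bnd k) = (\<Sum>k<m'. R!(Suc k) - R!k)"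
      by (rule sum.cong) (auto simp: bnd_def m')
    moreover have "bnd m' = R!0 + p - R!m'" unfolding bnd_def using m' by simp
    ultimately show ?thesis by simp
  qed
  also have "\<dots> = p"
  proof -
    have "(\<Sum>k<m'. R!(Suc k) - R!k) + R!0 = R!m'"
      using m' mlt unfolding m_def by (intro telescope) (auto intro: less_imp_le)
    moreover have "R!m' < p" using Rp m' by simp
    moreover have "R!0 \<le> R!m'" using mlt[of 0 m'] m' m'0 by simp
    ultimately show ?thesis by linarith
  qed
  finally show ?thesis using distL setL by blast
qed

lemma core:
  fixes S :: "nuc list set" and CC :: "nuc list list set" and W :: "nat \<Rightarrow> nuc"
    and \<psi> :: "nuc list \<Rightarrow> nuc list"
  assumes sf: "substring_free S" and opt: "optimal_cycle_cover S CC"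
    and c0: "c0 \<in> CC" and d0: "d0 \<in> CC" and cd: "c0 \<noteq> d0"
    and psi: "\<forall>x. \<psi> x = x \<or> \<psi> x = rc x"
    and psi_id: "\<forall>x. x \<notin> set c0 \<union> set d0 \<longrightarrow> \<psi> x = x"
    and p0: "p > 0" and per: "\<forall>n. W (n + p) = W n"
    and plt: "p < cycle_weight c0 + cycle_weight d0"
    and occs: "\<forall>x \<in> set c0 \<union> set d0. \<exists>r. occ W (\<psi> x) r"
  shows False
proof -
  have cc: "cycle_cover S CC" using opt unfolding optimal_cycle_cover_def by blast
  define U where "U = (\<Union>c\<in>CC. set c)"
  define V0 where "V0 = set c0 \<union> set d0"
  define V where "V = \<psi> ` V0"
  define rest where "rest = CC - {c0, d0}"
  have finCC: "finite CC" using cc unfolding cycle_cover_def by blast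
  have cyc: "\<And>c. c \<in> CC \<Longrightarrow> is_cycle S c" using cc unfolding cycle_cover_def by blast
  have disj: "\<And>c d. c \<in> CC \<Longrightarrow> d \<in> CC \<Longrightarrow> c \<noteq> d \<Longrightarrow> set c \<inter> set d = {}"
    using cc unfolding cycle_cover_def by blast
  have vert: "U \<subseteq> vertices S" unfolding U_def using cyc unfolding is_cycle_def by blast
  have nb: "\<And>x. x \<in> U \<Longrightarrow> rc x \<in> U \<Longrightarrow> rc x = x" unfolding U_def using no_both[OF cc] by blast
  have V0U: "V0 \<subseteq> U" unfolding V0_def U_def using c0 d0 by blast
  have dis: "\<And>c. c \<in> rest \<Longrightarrow> set c \<inter> V0 = {}"
    unfolding rest_def V0_def using disj c0 d0 by blast
  have psi_inj: "inj_on \<psi> U"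
  proof (rule inj_onI)
    fix x y assume xy: "x \<in> U" "y \<in> U" "\<psi> x = \<psi> y"
    have px: "\<psi> x = x \<or> \<psi> x = rc x" and py: "\<psi> y = y \<or> \<psi> y = rc y"
      using psi by simp_all
    show "x = y"
    proof (cases "\<psi> x = x")
      case T1: True
      show ?thesis
      proof (cases "\<psi> y = y")
        case True then show ?thesis using T1 xy by simp
      next
        case False
        then have "\<psi> y = rc y" using py by simp
        then have "x = rc y" using xy T1 by simp
        then show ?thesis using nb[of y] xy by simp
      qed
    next
      case F1: False
      then have rx: "\<psi> x = rc x" using px by simp
      show ?thesis
      proof (cases "\<psi> y = y")
        case True
        then have "y = rc x" using xy rx by simp
        then show ?thesis using nb[of x] xy by simp
      next
        case False
        then have "\<psi> y = rc y" using py by simp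
        then have "rc x = rc y" using xy rx by simp
        then show ?thesis by (metis rc_rc)
      qed
    qed
  qed
  have psi_vert: "\<And>x. x \<in> vertices S \<Longrightarrow> \<psi> x \<in> vertices S"
    using psi rc_vertices by metis
  have VS: "V \<subseteq> vertices S" unfolding V_def using V0U vert psi_vert by blast
  have ne0: "\<forall>z \<in> V0. z \<noteq> []" unfolding V0_def using all_nonempty[OF sf cc c0 d0 cd] .
  have ne: "\<And>x. x \<in> V \<Longrightarrow> x \<noteq> []"
  proof -
    fix x assume "x \<in> V"
    then obtain y where y: "y \<in> V0" "x = \<psi> y" unfolding V_def by blast
    then show "x \<noteq> []" using ne0 psi[rule_format, of y] by auto
  qed
  have c0ne: "c0 \<noteq> []" "d0 \<noteq> []" using cyc c0 d0 unfolding is_cycle_def by auto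
  have dj0: "set c0 \<inter> set d0 = {}" using disj c0 d0 cd by blast
  have cardV0: "card V0 \<ge> 2"
  proof -
    have "card (set c0) \<ge> 1" "card (set d0) \<ge> 1" using c0ne
      by (simp_all add: Suc_leI card_gt_0_iff)
    thus ?thesis unfolding V0_def using card_Un_disjoint[OF _ _ dj0] by simp
  qed
  have finV0: "finite V0" unfolding V0_def by simp
  have cardV: "card V \<ge> 2" unfolding V_def
    using card_image[OF inj_on_subset[OF psi_inj V0U]] cardV0 by simp
  have finV: "finite V" unfolding V_def using finV0 by simp
  define g where "g x = (SOME r. occ W x r) mod p" for x
  have occg: "occ W x (g x)" if x: "x \<in> V" for x
  proof -
    obtain y where y: "y \<in> V0" "x = \<psi> y" using x unfolding V_def by blast
    then have "\<exists>r. occ W x r" using occs unfolding V0_def by blast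
    then have "occ W x (SOME r. occ W x r)" by (rule someI_ex)
    then show ?thesis unfolding g_def by (rule occ_mod(1)[OF per])
  qed
  have gp: "g x < p" for x unfolding g_def using p0 by simp
  have nsub: "\<And>x y. x \<in> V \<Longrightarrow> y \<in> V \<Longrightarrow> x \<noteq> y \<Longrightarrow> \<not> sublist x y"
    using sf_D[OF sf] VS by blast
  have ginj: "inj_on g V"
  proof (rule inj_onI)
    fix x y assume xy: "x \<in> V" "y \<in> V" "g x = g y"
    show "x = y"
    proof (rule ccontr)
      assume "x \<noteq> y"
      have ox: "occ W x (g x)" using occg xy(1) .
      have oy: "occ W y (g x)" using occg[OF xy(2)] xy(3) by simp
      show False
      proof (cases "length x \<le> length y")
        case True then show False using occ_same[OF ox oy] nsub xy \<open>x \<noteq> y\<close> by blast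
      next
        case False then show False using occ_same[OF oy ox] nsub xy \<open>x \<noteq> y\<close> by fastforce
      qed
    qed
  qed
  obtain L where L: "distinct L" "set L = V" "cycle_weight L \<le> p"
    using sorted_cycle_bound[OF finV ginj gp occg per nsub ne cardV] by blast
  have disjL: "\<And>c. c \<in> rest \<Longrightarrow> set c \<inter> V = {}"
  proof -
    fix c assume c: "c \<in> rest"
    show "set c \<inter> V = {}"
    proof (rule ccontr)
      assume "set c \<inter> V \<noteq> {}"
      then obtain x where x: "x \<in> V0" "\<psi> x \<in> set c" unfolding V_def by blast
      have cCC: "c \<in> CC" using c unfolding rest_def by simp
      show False
      proof (cases "\<psi> x = x")
        case True
        then have "x \<in> set c" using x(2) by simp
        then show False using x(1) dis[OF c] by auto
      next
        case False
        then have "\<psi> x = rc x" using psi by blast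
        then have "rc x \<in> U" using x cCC unfolding U_def by auto
        then have "rc x = x" using nb V0U x by blast
        then show False using False \<open>\<psi> x = rc x\<close> by simp
      qed
    qed
  qed
  have Vne: "V \<noteq> {}"
  proof
    assume "V = {}"
    then have "card V = 0" by (simp only: card.empty)
    then show False using cardV by simp
  qed
  have Lnot: "L \<notin> rest"
  proof
    assume "L \<in> rest"
    then have "set L \<inter> V = {}" by (rule disjL)
    then show False using L(2) Vne by simp
  qed
  define CC' where "CC' = insert L rest"
  have Urest: "U = V0 \<union> (\<Union>c\<in>rest. set c)" unfolding U_def V0_def rest_def using c0 d0 by blast
  have U': "(\<Union>c\<in>CC'. set c) = \<psi> ` U"
  proof -
    have "\<psi> ` (\<Union>c\<in>rest. set c) = (\<Union>c\<in>rest. set c)"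
    proof -
      have "\<forall>x\<in>(\<Union>c\<in>rest. set c). \<psi> x = x" using dis psi_id unfolding V0_def by blast
      then have "\<psi> ` (\<Union>c\<in>rest. set c) = (\<lambda>x. x) ` (\<Union>c\<in>rest. set c)"
        by (intro image_cong[OF refl]) blast
      thus ?thesis by (simp only: image_ident)
    qed
    thus ?thesis unfolding CC'_def using L(2) Urest V_def by (simp add: image_Un)
  qed
  have nb': "\<And>t. t \<in> \<psi> ` U \<Longrightarrow> rc t \<in> \<psi> ` U \<Longrightarrow> rc t = t"
  proof -
    fix t assume t: "t \<in> \<psi> ` U" "rc t \<in> \<psi> ` U"
    then obtain z1 z2 where z: "z1 \<in> U" "t = \<psi> z1" "z2 \<in> U" "rc t = \<psi> z2" by blast
    have z1: "z1 = t \<or> z1 = rc t" using psi z by (metis rc_rc)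
    have z2: "z2 = t \<or> z2 = rc t" using psi z by (metis rc_rc)
    show "rc t = t"
    proof (cases "z1 = z2")
      case True then show ?thesis using z by simp
    next
      case False
      then have "rc z1 = z2" using z1 z2 by auto
      then have "rc z1 = z1" using nb z by blast
      then show ?thesis using \<open>rc z1 = z2\<close> False by simp
    qed
  qed
  have cc': "cycle_cover S CC'"
    unfolding cycle_cover_def
  proof (intro conjI ballI)
    show "finite CC'" unfolding CC'_def rest_def using finCC by simp
  next
    fix c assume "c \<in> CC'"
    then show "is_cycle S c"
    proof (cases "c = L")
      case True
      have "L \<noteq> []" using L(2) Vne by auto
      then show ?thesis using True L VS unfolding is_cycle_def by simp
    next
      case False then show ?thesis using \<open>c \<in> CC'\<close> cyc unfolding CC'_def rest_def by blast
    qed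
  next
    fix c d assume cd': "c \<in> CC'" "d \<in> CC'"
    show "c \<noteq> d \<longrightarrow> set c \<inter> set d = {}"
    proof
      assume "c \<noteq> d"
      then consider "c = L" "d \<in> rest" | "d = L" "c \<in> rest" | "c \<in> rest" "d \<in> rest"
        using cd' unfolding CC'_def by blast
      then show "set c \<inter> set d = {}"
      proof cases
        case 1 then show ?thesis using disjL L(2) by blast
      next
        case 2 then show ?thesis using disjL L(2) by blast
      next
        case 3 then show ?thesis using disj \<open>c \<noteq> d\<close> unfolding rest_def by blast
      qed
    qed
  next
    fix s assume s: "s \<in> S"
    have sU: "s \<in> U \<or> rc s \<in> U" using cc s unfolding cycle_cover_def Let_def U_def by blast
    have ex: "s \<in> \<psi> ` U \<or> rc s \<in> \<psi> ` U"
    proof (cases "s \<in> U")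
      case True
      then have "\<psi> s \<in> \<psi> ` U" by blast
      then show ?thesis using psi by metis
    next
      case False
      then have "rc s \<in> U" using sU by blast
      then have "\<psi> (rc s) \<in> \<psi> ` U" by blast
      then show ?thesis using psi by (metis rc_rc)
    qed
    have nboth: "s \<noteq> rc s \<longrightarrow> \<not> (s \<in> \<psi> ` U \<and> rc s \<in> \<psi> ` U)"
      using nb' by metis
    show "let U = \<Union> (set ` CC') in (s \<in> U \<or> rc s \<in> U) \<and> (s \<noteq> rc s \<longrightarrow> \<not> (s \<in> U \<and> rc s \<in> U))"
      unfolding Let_def using U' ex nboth by simp
  qed
  have wCC: "cover_weight CC = cycle_weight c0 + cycle_weight d0 + sum cycle_weight rest"
  proof -
    have "CC = insert c0 (insert d0 rest)" unfolding rest_def using c0 d0 by blast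
    moreover have "c0 \<notin> insert d0 rest" "d0 \<notin> rest" unfolding rest_def using cd by auto
    moreover have "finite rest" unfolding rest_def using finCC by simp
    ultimately show ?thesis unfolding cover_weight_def by simp
  qed
  have wCC': "cover_weight CC' = cycle_weight L + sum cycle_weight rest"
  proof -
    have "finite rest" unfolding rest_def using finCC by simp
    thus ?thesis unfolding cover_weight_def CC'_def using Lnot by simp
  qed
  have "cover_weight CC \<le> cover_weight CC'" using opt cc' unfolding optimal_cycle_cover_def by blast
  thus False using wCC wCC' L(3) plt by simp
qed

lemma use_core:
  fixes S :: "nuc list set" and CC :: "nuc list list set" and \<psi> :: "nuc list \<Rightarrow> nuc list"
  assumes sf: "substring_free S" and opt: "optimal_cycle_cover S CC"
    and c0: "c0 \<in> CC" and d0: "d0 \<in> CC" and cd: "c0 \<noteq> d0"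
    and eq: "equivalent a b" and a: "a \<noteq> []" and b: "b \<noteq> []"
    and ha: "hasper a (cycle_weight c0)" and w0: "cycle_weight c0 > 0" and w1: "cycle_weight d0 > 0"
    and psi: "\<forall>x. \<psi> x = x \<or> \<psi> x = rc x"
    and psi_id: "\<forall>x. x \<notin> set c0 \<union> set d0 \<longrightarrow> \<psi> x = x"
    and sa: "\<forall>x\<in>set c0. sublist (\<psi> x) a" and sb: "\<forall>x\<in>set d0. sublist (\<psi> x) b"
  shows False
proof -
  obtain W p where Wp: "0 < p" "p \<le> cycle_weight c0" "\<forall>n. W (n + p) = W n"
    "\<forall>x. sublist x a \<longrightarrow> (\<exists>r. occ W x r)" "\<forall>x. sublist x b \<longrightarrow> (\<exists>r. occ W x r)"
    using wrap[OF eq a b ha w0] by blast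
  have occs: "\<forall>x \<in> set c0 \<union> set d0. \<exists>r. occ W (\<psi> x) r" using Wp(4,5) sa sb by blast
  have plt: "p < cycle_weight c0 + cycle_weight d0" using Wp(2) w1 by simp
  show False using core[OF sf opt c0 d0 cd psi psi_id Wp(1) Wp(3) plt occs] .
qed

theorem lemma11:
  fixes S :: "nuc list set" and CC :: "nuc list list set"
    and c0 d0 :: "nuc list list" and i j :: nat
  assumes "finite S"
    and "substring_free S"
    and "optimal_cycle_cover S CC"
    and "c0 \<in> CC" and "d0 \<in> CC" and "c0 \<noteq> d0"
  defines "e \<equiv> merge (rotate i c0)" and "f \<equiv> merge (rotate j d0)"
  shows "\<not> equivalent e f \<and> \<not> equivalent e (rc f)
         \<and> \<not> equivalent (rc e) f \<and> \<not> equivalent (rc e) (rc f)"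
proof -
  note sf = assms(2) and opt = assms(3) and c0 = assms(4) and d0 = assms(5) and cd = assms(6)
  have cc: "cycle_cover S CC" using opt unfolding optimal_cycle_cover_def by blast
  have ne: "\<forall>z \<in> set c0 \<union> set d0. z \<noteq> []" using all_nonempty[OF sf cc c0 d0 cd] .
  have cyc: "c0 \<noteq> []" "d0 \<noteq> []" using cc c0 d0 unfolding cycle_cover_def is_cycle_def by auto
  have dj: "set c0 \<inter> set d0 = {}" using cc c0 d0 cd unfolding cycle_cover_def by blast
  define cs where "cs = rotate i c0"
  define ds where "ds = rotate j d0"
  have scs: "set cs = set c0" "set ds = set d0" unfolding cs_def ds_def by simp_all
  have csne: "cs \<noteq> []" "ds \<noteq> []" using cyc unfolding cs_def ds_def by simp_all
  have nec: "\<forall>z\<in>set cs. z \<noteq> []" "\<forall>z\<in>set ds. z \<noteq> []" using ne scs by auto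
  have se: "\<forall>x\<in>set c0. sublist x e" unfolding e_def using sublist_merge[OF nec(1)] scs cs_def by simp
  have sf': "\<forall>x\<in>set d0. sublist x f" unfolding f_def using sublist_merge[OF nec(2)] scs ds_def by simp
  have ene: "e \<noteq> []"
  proof -
    obtain x where "x \<in> set c0" using cyc by (metis list.set_intros(1) neq_Nil_conv)
    thus ?thesis using se ne by (metis Nil_is_append_conv sublist_Nil_right UnI1)
  qed
  have fne: "f \<noteq> []"
  proof -
    obtain x where "x \<in> set d0" using cyc by (metis list.set_intros(1) neq_Nil_conv)
    thus ?thesis using sf' ne by (metis Nil_is_append_conv sublist_Nil_right UnI2)
  qed
  have he: "hasper e (cycle_weight c0)"
    using merge_period[OF csne(1) nec(1)] unfolding e_def cs_def cw_rotate .
  have hf: "hasper f (cycle_weight d0)"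
    using merge_period[OF csne(2) nec(2)] unfolding f_def ds_def cw_rotate .
  have w0: "cycle_weight c0 > 0" using cw_pos[OF cyc(1)] ne by auto
  have w1: "cycle_weight d0 > 0" using cw_pos[OF cyc(2)] ne by auto
  have rcne: "rc e \<noteq> []" "rc f \<noteq> []" using ene fne by simp_all
  have A: "\<not> equivalent e f"
  proof
    assume eq: "equivalent e f"
    show False
      by (rule use_core[OF sf opt c0 d0 cd eq ene fne he w0 w1, where \<psi>="\<lambda>x. x"])
        (use se sf' in auto)
  qed
  have B: "\<not> equivalent e (rc f)"
  proof
    assume eq: "equivalent e (rc f)"
    show False
    proof (rule use_core[OF sf opt c0 d0 cd eq ene rcne(2) he w0 w1,
          where \<psi>="\<lambda>x. if x \<in> set d0 then rc x else x"])
      show "\<forall>x\<in>set c0. sublist (if x \<in> set d0 then rc x else x) e" using se dj by auto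
      show "\<forall>x\<in>set d0. sublist (if x \<in> set d0 then rc x else x) (rc f)" using sf' sublist_rc by auto
    qed auto
  qed
  have C: "\<not> equivalent (rc e) f"
  proof
    assume "equivalent (rc e) f"
    hence eq: "equivalent f (rc e)" by (rule equivalent_sym)
    show False
    proof (rule use_core[OF sf opt d0 c0 cd[symmetric] eq fne rcne(1) hf w1 w0,
          where \<psi>="\<lambda>x. if x \<in> set c0 then rc x else x"])
      show "\<forall>x\<in>set d0. sublist (if x \<in> set c0 then rc x else x) f" using sf' dj by auto
      show "\<forall>x\<in>set c0. sublist (if x \<in> set c0 then rc x else x) (rc e)" using se sublist_rc by auto
    qed auto
  qed
  have D: "\<not> equivalent (rc e) (rc f)"
  proof
    assume eq: "equivalent (rc e) (rc f)"
    show False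
    proof (rule use_core[OF sf opt c0 d0 cd eq rcne(1) rcne(2) hasper_rc[OF he] w0 w1,
          where \<psi>="\<lambda>x. if x \<in> set c0 \<union> set d0 then rc x else x"])
      show "\<forall>x\<in>set c0. sublist (if x \<in> set c0 \<union> set d0 then rc x else x) (rc e)" using se sublist_rc by auto
      show "\<forall>x\<in>set d0. sublist (if x \<in> set c0 \<union> set d0 then rc x else x) (rc f)" using sf' sublist_rc by auto
    qed auto
  qed
  show ?thesis using A B C D by blast
qed

end
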